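(* Under the hypotheses of Theorem 4 (stated in the context), define $\bar{\boldsymbol\rho}_\star\in\mathbb C^N$ by $$(\bar{\boldsymbol\rho}_\star)_j=\sum_{q:\ \vec{\mathbf z}_q\in\mathcal B_r(\vec{\mathbf z}_j)}(\boldsymbol\rho_\star)_q\,\langle\mathbf g_j,\mathbf g_q\rangle\ \ \text{for } j\in\mathcal S,\qquad(\bar{\boldsymbol\rho}_\star)_j=0\ \ \text{for } j\notin\mathcal S.$$ Then $$\|\boldsymbol\rho-\bar{\boldsymbol\rho}_\star\|_1\le\frac{2\,\mathcal I(\mathcal Y)}{r}\,\|\boldsymbol\rho\|_1.$$
   Context: Let $W$ be a set (the imaging region) and $M\ge1$. For each $\vec{\mathbf y}\in W$ let $\mathbf g_{\vec{\mathbf y}}\in\mathbb C^M$ be a vector with $\|\mathbf g_{\vec{\mathbf y}}\|_2=1$. Let $\vec{\mathbf z}_1,\dots,\vec{\mathbf z}_N\in W$ be distinct (grid) points, write $\mathbf g_j=\mathbf g_{\vec{\mathbf z}_j}$, and let $\mathcal G\in\mathbb C^{M\times N}$ be the matrix with columns $\mathbf g_j$. Inner product: $\langle\mathbf u,\mathbf v\rangle=\mathbf u^H\mathbf v=\sum_i\overline{u_i}v_i$. $\|\cdot\|_1$ is the $\ell_1$ norm. Semi-metric: $\mathscr D(\vec{\mathbf y},\vec{\mathbf y}')=1-|\langle\mathbf g_{\vec{\mathbf y}},\mathbf g_{\vec{\mathbf y}'}\rangle|$; ball $\mathcal B_r(\vec{\mathbf y})=\{\vec{\mathbf y}'\in W:\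 \mathscr D(\vec{\mathbf y},\vec{\mathbf y}')<r\}$. Interaction coefficient: for a finite set $\mathcal Y\subset W$ and each $q$, let $\mathscr N(\vec{\mathbf z}_q)\in\mathcal Y$ be a point of $\mathcal Y$ minimizing $\mathscr D(\vec{\mathbf z}_q,\cdot)$ over $\mathcal Y$; then $\mathcal I(\mathcal Y)=\max_{q=1,\dots,N}\sum_{\vec{\mathbf y}\in\mathcal Y\setminus\{\mathscr N(\vec{\mathbf z}_q)\}}|\langle\mathbf g_{\vec{\mathbf y}},\mathbf g_q\rangle|$. Hypotheses of Theorem 4: $\mathcal S\subset\{1,\dots,N\}$ with $|\mathcal S|=s$; $\boldsymbol\rho\in\mathbb C^N$ supported in $\mathcal S$; $\mathbf d=\mathcal G\boldsymbol\rho$; $\mathcal Y=\{\vec{\mathbf z}_j:j\in\mathcal S\}$; $r\in(0,1)$ with the balls $\mathcal B_r(\vec{\mathbf z}_j)$, $j\in\mathcal S$, pairwise disjoint; $\boldsymbol\rho_\star$ is a minimizer of $\|\mathbf x\|_1$ over $\mathbf x\in\mathbb C^N$ subject to $\mathcal G\mathbf x=\mathbf d$. *)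

theory Defs
  imports "HOL-Analysis.Analysis"
begin

definition hip :: "complex^'m \<Rightarrow> complex^'m \<Rightarrow> complex" where
  "hip u v = (\<Sum>i\<in>UNIV. cnj (u $ i) * v $ i)"

definition l1norm :: "complex^'n \<Rightarrow> real" where
  "l1norm x = (\<Sum>j\<in>UNIV. norm (x $ j))"

definition semimetric :: "('a \<Rightarrow> complex^'m) \<Rightarrow> 'a \<Rightarrow> 'a \<Rightarrow> real" where
  "semimetric g y y' = 1 - norm (hip (g y) (g y'))"

definition sball :: "'a set \<Rightarrow> ('a \<Rightarrow> complex^'m) \<Rightarrow> real \<Rightarrow> 'a \<Rightarrow> 'a set" where
  "sball W g r y = {y'\<in>W. semimetric g y y' < r}"

definition Gmat :: "('a \<Rightarrow> complex^'m) \<Rightarrow> ('n \<Rightarrow> 'a) \<Rightarrow> complex^'n^'m" where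
  "Gmat g z = (\<chi> i j. g (z j) $ i)"

definition nearest_choice ::
  "('a \<Rightarrow> complex^'m) \<Rightarrow> ('n \<Rightarrow> 'a) \<Rightarrow> 'a set \<Rightarrow> ('n \<Rightarrow> 'a) \<Rightarrow> bool" where
  "nearest_choice g z Y nn \<longleftrightarrow>
     (\<forall>q. nn q \<in> Y \<and> (\<forall>y\<in>Y. semimetric g (z q) (nn q) \<le> semimetric g (z q) y))"

definition interaction ::
  "('a \<Rightarrow> complex^'m) \<Rightarrow> ('n::finite \<Rightarrow> 'a) \<Rightarrow> 'a set \<Rightarrow> ('n \<Rightarrow> 'a) \<Rightarrow> real" where
  "interaction g z Y nn =
     Max ((\<lambda>q. \<Sum>y\<in>Y - {nn q}. norm (hip (g y) (g (z q)))) ` UNIV)"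

end

theory Submission
  imports Defs
begin


lemma hip_cs: "norm (hip u v) \<le> norm u * norm v"
proof -
  have "norm (hip u v) \<le> (\<Sum>i\<in>UNIV. norm (cnj (u $ i) * v $ i))"
    unfolding hip_def by (rule norm_sum)
  also have "\<dots> = (\<Sum>i\<in>UNIV. \<bar>norm (u $ i)\<bar> * \<bar>norm (v $ i)\<bar>)"
    by (simp add: norm_mult)
  also have "\<dots> \<le> L2_set (\<lambda>i. norm (u $ i)) UNIV * L2_set (\<lambda>i. norm (v $ i)) UNIV"
    by (rule L2_set_mult_ineq)
  finally show ?thesis by (simp add: norm_vec_def)
qed

lemma hip_self: "hip u u = of_real ((norm u)^2)"
proof -
  have "(norm u)^2 = (\<Sum>i\<in>UNIV. (norm (u $ i))^2)"
    unfolding norm_vec_def L2_set_def by (simp add: sum_nonneg)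
  hence "of_real ((norm u)^2) = (\<Sum>i\<in>UNIV. (of_real ((norm (u $ i))^2)::complex))" by simp
  also have "\<dots> = hip u u" unfolding hip_def
    by (rule sum.cong) (auto simp: mult.commute simp flip: complex_norm_square)
  finally show ?thesis by simp
qed

lemma hip_sym: "norm (hip u v) = norm (hip v u)"
proof -
  have "hip v u = cnj (hip u v)" unfolding hip_def by (simp add: mult.commute)
  thus ?thesis by simp
qed

lemma hip_mv: "hip u (Gmat g z *v x) = (\<Sum>q\<in>UNIV. x $ q * hip u (g (z q)))"
proof -
  have "hip u (Gmat g z *v x) = (\<Sum>i\<in>UNIV. \<Sum>q\<in>UNIV. cnj (u $ i) * (g (z q) $ i * x $ q))"
    unfolding hip_def Gmat_def matrix_vector_mult_def by (simp add: sum_distrib_left)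
  also have "\<dots> = (\<Sum>q\<in>UNIV. \<Sum>i\<in>UNIV. cnj (u $ i) * (g (z q) $ i * x $ q))"
    by (rule sum.swap)
  also have "\<dots> = (\<Sum>q\<in>UNIV. x $ q * hip u (g (z q)))"
    unfolding hip_def by (simp add: sum_distrib_left mult.commute mult.left_commute)
  finally show ?thesis .
qed

lemma sum_minus_if:
  assumes "finite S"
  shows "(\<Sum>k\<in>S-{j}. f k) = (\<Sum>k\<in>S. if k = j then 0 else f k)"
  by (rule sum.mono_neutral_cong_left) (use assms in auto)

lemma sum_split_if:
  fixes f :: "'n::finite \<Rightarrow> 'b::ab_group_add"
  shows "(\<Sum>q\<in>UNIV. f q) = (\<Sum>q\<in>B. f q) + (\<Sum>q\<in>UNIV. if q \<in> B then 0 else f q)"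
proof -
  have "(\<Sum>q\<in>UNIV. f q) = (\<Sum>q\<in>UNIV. (if q \<in> B then f q else 0) + (if q \<in> B then 0 else f q))"
    by (rule sum.cong) auto
  also have "\<dots> = (\<Sum>q\<in>UNIV. if q \<in> B then f q else 0) + (\<Sum>q\<in>UNIV. if q \<in> B then 0 else f q)"
    by (rule sum.distrib)
  also have "(\<Sum>q\<in>UNIV. if q \<in> B then f q else 0) = (\<Sum>q\<in>B. f q)"
    using sum.inter_restrict[of UNIV f B] by simp
  finally show ?thesis .
qed

theorem corollary1:
  fixes W :: "'a set" and g :: "'a \<Rightarrow> complex^'m" and z :: "'n::finite \<Rightarrow> 'a"
    and S :: "'n set" and rho rho_star :: "complex^'n" and r :: real
    and nn :: "'n \<Rightarrow> 'a"
  assumes g_unit: "\<And>y. y \<in> W \<Longrightarrow> norm (g y) = 1"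
    and z_in: "\<And>j. z j \<in> W"
    and z_inj: "inj z"
    and supp: "\<And>j. j \<notin> S \<Longrightarrow> rho $ j = 0"
    and r_pos: "0 < r" and r_lt1: "r < 1"
    and disj: "\<And>j k. j \<in> S \<Longrightarrow> k \<in> S \<Longrightarrow> j \<noteq> k \<Longrightarrow>
                 sball W g r (z j) \<inter> sball W g r (z k) = {}"
    and feas: "Gmat g z *v rho_star = Gmat g z *v rho"
    and minim: "\<And>x. Gmat g z *v x = Gmat g z *v rho \<Longrightarrow> l1norm rho_star \<le> l1norm x"
    and nn: "nearest_choice g z (z ` S) nn"
  shows "l1norm (rho - (\<chi> j. if j \<in> S then
              (\<Sum>q\<in>{q. z q \<in> sball W g r (z j)}. rho_star $ q * hip (g (z j)) (g (z q)))
            else 0))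
         \<le> 2 * interaction g z (z ` S) nn / r * l1norm rho"
proof -
  define h where "h j q = hip (g (z j)) (g (z q))" for j q
  define B where "B j = {q. z q \<in> sball W g r (z j)}" for j
  define I where "I = interaction g z (z ` S) nn"
  define ind where "ind q = (if (\<exists>j\<in>S. q \<in> B j) then 0 else 1::real)" for q
  define m where "m = (\<Sum>q\<in>UNIV. norm (rho_star $ q) * ind q)"
  define L where "L = l1norm rho"
  define Ls where "Ls = l1norm rho_star"
  define rbar where "rbar = (\<chi> j. if j \<in> S then
              (\<Sum>q\<in>{q. z q \<in> sball W g r (z j)}. rho_star $ q * hip (g (z j)) (g (z q)))
            else 0)"
  have finS: "finite S" by simp
  have memB: "q \<in> B j \<longleftrightarrow> 1 - norm (h j q) < r" for j q
    using z_in unfolding B_def sball_def semimetric_def h_def by auto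
  have hle1: "norm (h j q) \<le> 1" for j q
    using hip_cs[of "g (z j)" "g (z q)"] g_unit z_in unfolding h_def by simp
  have hjj: "h j j = 1" for j
    using hip_self[of "g (z j)"] g_unit z_in unfolding h_def by simp
  have Imax: "(\<Sum>y\<in>z`S - {nn q}. norm (hip (g y) (g (z q)))) \<le> I" for q
    unfolding I_def interaction_def by (rule Max_ge) auto
  have I0: "0 \<le> I" using Imax[of undefined] order_trans sum_nonneg
    by (metis (no_types, lifting) norm_ge_zero)
  have nnq: "\<exists>j0\<in>S. nn q = z j0 \<and> (\<forall>j\<in>S. norm (h j q) \<le> norm (h j0 q))" for q
  proof -
    from nn have "nn q \<in> z ` S" and le: "\<forall>y\<in>z`S. semimetric g (z q) (nn q) \<le> semimetric g (z q) y"
      unfolding nearest_choice_def by auto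
    then obtain j0 where j0: "j0 \<in> S" "nn q = z j0" by auto
    have "norm (h j q) \<le> norm (h j0 q)" if "j \<in> S" for j
      using le that j0 unfolding semimetric_def h_def by (auto simp: hip_sym)
    with j0 show ?thesis by auto
  qed
  have Isum: "(\<Sum>j\<in>S-{j0}. norm (h j q)) \<le> I" if "j0 \<in> S" "nn q = z j0" for q j0
  proof -
    have "z ` S - {nn q} = z ` (S - {j0})" using that z_inj by (simp add: image_set_diff)
    hence "(\<Sum>y\<in>z`S - {nn q}. norm (hip (g y) (g (z q)))) = (\<Sum>j\<in>S-{j0}. norm (h j q))"
      using z_inj unfolding h_def by (simp add: sum.reindex inj_on_def inj_def)
    with Imax[of q] show ?thesis by simp
  qed
  have F3: "(\<Sum>j\<in>S-{k}. norm (h j k)) \<le> I" if kS: "k \<in> S" for k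
  proof -
    obtain j0 where j0: "j0 \<in> S" "nn k = z j0" "\<forall>j\<in>S. norm (h j k) \<le> norm (h j0 k)"
      using nnq[of k] by auto
    have "j0 = k"
    proof (rule ccontr)
      assume ne: "j0 \<noteq> k"
      have "k \<in> B k" using memB hjj r_pos by simp
      moreover have "norm (h j0 k) \<ge> 1" using j0(3) kS hjj by force
      hence "k \<in> B j0" using memB r_pos by force
      ultimately show False using disj[OF j0(1) kS ne] unfolding B_def by auto
    qed
    with Isum[OF j0(1,2)] show ?thesis by simp
  qed
  have F4: "(\<Sum>j\<in>S. norm (h j q)) \<le> I + 1 - r * ind q \<and>
            (\<Sum>j\<in>S. if q \<in> B j then 0 else norm (h j q)) \<le> I + (1 - r) * ind q" for q
  proof -
    obtain j0 where j0: "j0 \<in> S" "nn q = z j0" "\<forall>j\<in>S. norm (h j q) \<le> norm (h j0 q)"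
      using nnq[of q] by auto
    have sc: "(\<Sum>j\<in>S. norm (h j q)) = norm (h j0 q) + (\<Sum>j\<in>S-{j0}. norm (h j q))"
      using j0(1) finS by (simp add: sum.remove)
    have st: "(\<Sum>j\<in>S. if q \<in> B j then 0 else norm (h j q)) =
        (if q \<in> B j0 then 0 else norm (h j0 q)) + (\<Sum>j\<in>S-{j0}. if q \<in> B j then 0 else norm (h j q))"
      using j0(1) finS by (simp add: sum.remove)
    have st2: "(\<Sum>j\<in>S-{j0}. if q \<in> B j then 0 else norm (h j q)) \<le> (\<Sum>j\<in>S-{j0}. norm (h j q))"
      by (rule sum_mono) auto
    have IS: "(\<Sum>j\<in>S-{j0}. norm (h j q)) \<le> I" by (rule Isum[OF j0(1,2)])
    show ?thesis
    proof (cases "\<exists>j\<in>S. q \<in> B j")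
      case True
      then obtain j1 where "j1 \<in> S" "q \<in> B j1" by auto
      hence "q \<in> B j0" using memB j0(3) by force
      thus ?thesis using True sc st st2 IS hle1[of j0 q] unfolding ind_def by simp
    next
      case False
      hence "q \<notin> B j0" using j0(1) by auto
      hence "norm (h j0 q) \<le> 1 - r" using memB by simp
      thus ?thesis using False sc st st2 IS unfolding ind_def by simp
    qed
  qed
  have F1: "(\<Sum>q\<in>UNIV. rho_star $ q * h j q) = (\<Sum>q\<in>UNIV. rho $ q * h j q)" for j
    using arg_cong[OF feas, of "hip (g (z j))"] unfolding hip_mv h_def .
  have SU: "(\<Sum>q\<in>UNIV. f q) = (\<Sum>q\<in>S. f q)" if "\<And>q. q \<notin> S \<Longrightarrow> f q = 0"
    for f :: "'n \<Rightarrow> 'b::comm_monoid_add"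
    by (rule sum.mono_neutral_right) (use that in auto)
  have F2: "(\<Sum>q\<in>UNIV. rho $ q * h j q) = rho $ j + (\<Sum>k\<in>S-{j}. rho $ k * h j k)" if "j \<in> S" for j
  proof -
    have "(\<Sum>q\<in>UNIV. rho $ q * h j q) = (\<Sum>q\<in>S. rho $ q * h j q)" by (rule SU) (simp add: supp)
    also have "\<dots> = rho $ j * h j j + (\<Sum>k\<in>S-{j}. rho $ k * h j k)"
      using that finS by (simp add: sum.remove)
    finally show ?thesis using hjj by simp
  qed
  have LS: "L = (\<Sum>j\<in>S. norm (rho $ j))" unfolding L_def l1norm_def by (rule SU) (simp add: supp)
  have A0: "l1norm (rho - rbar) = (\<Sum>j\<in>S. norm (rho $ j - rbar $ j))"
    unfolding l1norm_def vector_minus_component by (rule SU) (simp add: supp rbar_def)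
  have Dj: "norm (rho $ j - rbar $ j) \<le> (\<Sum>q\<in>UNIV. if q \<in> B j then 0 else norm (rho_star $ q) * norm (h j q))
          + (\<Sum>k\<in>S. if k = j then 0 else norm (rho $ k) * norm (h j k))" if jS: "j \<in> S" for j
  proof -
    have rb: "rbar $ j = (\<Sum>q\<in>B j. rho_star $ q * h j q)" using jS unfolding rbar_def B_def h_def by simp
    have "rho $ j = (\<Sum>q\<in>UNIV. rho_star $ q * h j q) - (\<Sum>k\<in>S-{j}. rho $ k * h j k)"
      using F1[of j] F2[OF jS] by simp
    hence "rho $ j - rbar $ j = (\<Sum>q\<in>UNIV. if q \<in> B j then 0 else rho_star $ q * h j q)
        - (\<Sum>k\<in>S-{j}. rho $ k * h j k)"
      using sum_split_if[of "\<lambda>q. rho_star $ q * h j q" "B j"] rb by simp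
    hence "norm (rho $ j - rbar $ j) \<le> norm (\<Sum>q\<in>UNIV. if q \<in> B j then 0 else rho_star $ q * h j q)
        + norm (\<Sum>k\<in>S-{j}. rho $ k * h j k)" by (metis norm_triangle_ineq4)
    also have "\<dots> \<le> (\<Sum>q\<in>UNIV. norm (if q \<in> B j then 0 else rho_star $ q * h j q))
        + (\<Sum>k\<in>S-{j}. norm (rho $ k * h j k))"
      by (intro add_mono norm_sum)
    also have "\<dots> = (\<Sum>q\<in>UNIV. if q \<in> B j then 0 else norm (rho_star $ q) * norm (h j q))
          + (\<Sum>k\<in>S. if k = j then 0 else norm (rho $ k) * norm (h j k))"
      by (simp add: sum_minus_if[OF finS] norm_mult if_distrib cong: if_cong)
    finally show ?thesis .
  qed
  have Rj: "norm (rho $ j) \<le> (\<Sum>q\<in>UNIV. norm (rho_star $ q) * norm (h j q))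
          + (\<Sum>k\<in>S. if k = j then 0 else norm (rho $ k) * norm (h j k))" if jS: "j \<in> S" for j
  proof -
    have "rho $ j = (\<Sum>q\<in>UNIV. rho_star $ q * h j q) - (\<Sum>k\<in>S-{j}. rho $ k * h j k)"
      using F1[of j] F2[OF jS] by simp
    hence "norm (rho $ j) \<le> norm (\<Sum>q\<in>UNIV. rho_star $ q * h j q)
        + norm (\<Sum>k\<in>S-{j}. rho $ k * h j k)" by (metis norm_triangle_ineq4)
    also have "\<dots> \<le> (\<Sum>q\<in>UNIV. norm (rho_star $ q * h j q))
        + (\<Sum>k\<in>S-{j}. norm (rho $ k * h j k))"
      by (intro add_mono norm_sum)
    also have "\<dots> = (\<Sum>q\<in>UNIV. norm (rho_star $ q) * norm (h j q))
          + (\<Sum>k\<in>S. if k = j then 0 else norm (rho $ k) * norm (h j k))"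
      by (simp add: sum_minus_if[OF finS] norm_mult)
    finally show ?thesis .
  qed
  have Sec: "(\<Sum>j\<in>S. \<Sum>k\<in>S. if k = j then 0 else norm (rho $ k) * norm (h j k)) \<le> I * L"
  proof -
    have "(\<Sum>j\<in>S. \<Sum>k\<in>S. if k = j then 0 else norm (rho $ k) * norm (h j k))
        = (\<Sum>k\<in>S. \<Sum>j\<in>S. if k = j then 0 else norm (rho $ k) * norm (h j k))" by (rule sum.swap)
    also have "\<dots> = (\<Sum>k\<in>S. norm (rho $ k) * (\<Sum>j\<in>S-{k}. norm (h j k)))"
      by (rule sum.cong) (auto simp: sum_minus_if[OF finS] sum_distrib_left if_distrib eq_commute cong: if_cong)
    also have "\<dots> \<le> (\<Sum>k\<in>S. norm (rho $ k) * I)"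
      by (rule sum_mono) (auto intro: mult_left_mono F3)
    also have "\<dots> = I * L" by (simp add: LS sum_distrib_left mult.commute)
    finally show ?thesis .
  qed
  have First: "(\<Sum>j\<in>S. \<Sum>q\<in>UNIV. if q \<in> B j then 0 else norm (rho_star $ q) * norm (h j q))
      \<le> I * Ls + (1 - r) * m"
  proof -
    have "(\<Sum>j\<in>S. \<Sum>q\<in>UNIV. if q \<in> B j then 0 else norm (rho_star $ q) * norm (h j q))
        = (\<Sum>q\<in>UNIV. \<Sum>j\<in>S. if q \<in> B j then 0 else norm (rho_star $ q) * norm (h j q))" by (rule sum.swap)
    also have "\<dots> = (\<Sum>q\<in>UNIV. norm (rho_star $ q) * (\<Sum>j\<in>S. if q \<in> B j then 0 else norm (h j q)))"
      by (rule sum.cong) (auto simp: sum_distrib_left if_distrib cong: if_cong)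
    also have "\<dots> \<le> (\<Sum>q\<in>UNIV. norm (rho_star $ q) * (I + (1 - r) * ind q))"
      by (rule sum_mono) (auto intro: mult_left_mono F4[THEN conjunct2])
    also have "\<dots> = (\<Sum>q\<in>UNIV. I * norm (rho_star $ q) + (1 - r) * (norm (rho_star $ q) * ind q))"
      by (rule sum.cong) (auto simp: algebra_simps)
    also have "\<dots> = I * Ls + (1 - r) * m"
      by (simp add: Ls_def m_def l1norm_def sum.distrib sum_distrib_left)
    finally show ?thesis .
  qed
  have Second: "(\<Sum>j\<in>S. \<Sum>q\<in>UNIV. norm (rho_star $ q) * norm (h j q)) \<le> (I + 1) * Ls - r * m"
  proof -
    have "(\<Sum>j\<in>S. \<Sum>q\<in>UNIV. norm (rho_star $ q) * norm (h j q))
        = (\<Sum>q\<in>UNIV. \<Sum>j\<in>S. norm (rho_star $ q) * norm (h j q))" by (rule sum.swap)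
    also have "\<dots> = (\<Sum>q\<in>UNIV. norm (rho_star $ q) * (\<Sum>j\<in>S. norm (h j q)))"
      by (simp add: sum_distrib_left)
    also have "\<dots> \<le> (\<Sum>q\<in>UNIV. norm (rho_star $ q) * (I + 1 - r * ind q))"
      by (rule sum_mono) (auto intro: mult_left_mono F4[THEN conjunct1])
    also have "\<dots> = (\<Sum>q\<in>UNIV. (I + 1) * norm (rho_star $ q) - r * (norm (rho_star $ q) * ind q))"
      by (rule sum.cong) (auto simp: algebra_simps)
    also have "\<dots> = (I + 1) * Ls - r * m"
      by (simp only: Ls_def m_def l1norm_def sum_subtractf sum_distrib_left)
    finally show ?thesis .
  qed
  have A: "l1norm (rho - rbar) \<le> I * Ls + (1 - r) * m + I * L"
  proof -
    have "l1norm (rho - rbar) \<le> (\<Sum>j\<in>S. (\<Sum>q\<in>UNIV. if q \<in> B j then 0 else norm (rho_star $ q) * norm (h j q))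
          + (\<Sum>k\<in>S. if k = j then 0 else norm (rho $ k) * norm (h j k)))"
      unfolding A0 by (rule sum_mono) (rule Dj)
    also have "\<dots> = (\<Sum>j\<in>S. \<Sum>q\<in>UNIV. if q \<in> B j then 0 else norm (rho_star $ q) * norm (h j q))
          + (\<Sum>j\<in>S. \<Sum>k\<in>S. if k = j then 0 else norm (rho $ k) * norm (h j k))"
      by (rule sum.distrib)
    finally show ?thesis using First Sec by linarith
  qed
  have Lb: "L \<le> (I + 1) * Ls - r * m + I * L"
  proof -
    have "L \<le> (\<Sum>j\<in>S. (\<Sum>q\<in>UNIV. norm (rho_star $ q) * norm (h j q))
          + (\<Sum>k\<in>S. if k = j then 0 else norm (rho $ k) * norm (h j k)))"
      unfolding LS by (rule sum_mono) (rule Rj)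
    also have "\<dots> = (\<Sum>j\<in>S. \<Sum>q\<in>UNIV. norm (rho_star $ q) * norm (h j q))
          + (\<Sum>j\<in>S. \<Sum>k\<in>S. if k = j then 0 else norm (rho $ k) * norm (h j k))"
      by (rule sum.distrib)
    finally show ?thesis using Second Sec by linarith
  qed
  have LsL: "Ls \<le> L" unfolding Ls_def L_def using minim by simp
  have m0: "0 \<le> m" unfolding m_def ind_def by (rule sum_nonneg) auto
  have L0: "0 \<le> L" unfolding L_def l1norm_def by (rule sum_nonneg) auto
  have rm: "r * m \<le> 2 * I * L"
  proof -
    have "(I + 1) * Ls \<le> (I + 1) * L" using LsL I0 by (intro mult_left_mono) auto
    hence "I * Ls + Ls \<le> I * L + L" by (simp add: distrib_right)
    moreover have "L \<le> I * Ls + Ls - r * m + I * L" using Lb by (simp add: distrib_right)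
    ultimately show ?thesis by linarith
  qed
  have ILs: "I * Ls \<le> I * L" by (rule mult_left_mono[OF LsL I0])
  have "r * l1norm (rho - rbar) \<le> r * (I * L + (1 - r) * m + I * L)"
    using A ILs r_pos by (intro mult_left_mono) auto
  also have "\<dots> = 2 * r * I * L + (1 - r) * (r * m)" by (simp add: algebra_simps)
  also have "\<dots> \<le> 2 * r * I * L + (1 - r) * (2 * I * L)"
    using rm r_lt1 by (intro add_left_mono mult_left_mono) auto
  also have "\<dots> = r * (2 * I / r * L)" using r_pos by (simp add: field_simps)
  finally have "l1norm (rho - rbar) \<le> 2 * I / r * L" using r_pos by (simp add: pos_le_divide_eq mult.commute)
  thus ?thesis unfolding rbar_def I_def L_def .
qed

end
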